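(* Let $(\lambda_n)_{n\ge1}$ be real numbers with $\lambda_n\in(0,1)$ for all $n$, such that $\sum_{n=1}^\infty\lambda_n=\infty$ and $$\sum_{j=1}^n\frac{\prod_{k=1}^n(1-\lambda_k)}{1-\lambda_j}\to0\quad\text{as }n\to\infty.$$ Let $(a_n)_{n\ge1}$ be a nonnegative sequence satisfying $a_n\le(1-\lambda_n)a_{n-1}+\prod_{k=1}^n(1-\lambda_k)$ for all $n\ge2$. Then $\lim_{n\to\infty}a_n=0$. *)

theory Defs
  imports "HOL-Analysis.Analysis"
begin

end

theory Submission
  imports Defs
begin

theorem lemma3p1:
  fixes lam a :: "nat \<Rightarrow> real"
  assumes lam_range: "\<And>n. n \<ge> 1 \<Longrightarrow> 0 < lam n \<and> lam n < 1"
    and lam_div: "\<not> summable (\<lambda>n. lam (Suc n))"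
    and lam_lim: "(\<lambda>n. \<Sum>j=1..n. (\<Prod>k=1..n. (1 - lam k)) / (1 - lam j)) \<longlonglongrightarrow> 0"
    and a_nonneg: "\<And>n. n \<ge> 1 \<Longrightarrow> a n \<ge> 0"
    and a_rec: "\<And>n. n \<ge> 2 \<Longrightarrow> a n \<le> (1 - lam n) * a (n - 1) + (\<Prod>k=1..n. (1 - lam k))"
  shows "a \<longlonglongrightarrow> 0"
proof -
  define P where "P n = (\<Prod>k=1..n. (1 - lam k))" for n
  define c where "c = a 1 / P 1"
  have Ppos: "P n > 0" for n
    unfolding P_def using lam_range by (intro prod_pos) auto
  have PSuc: "P (Suc n) = (1 - lam (Suc n)) * P n" for n
    unfolding P_def by (simp add: atLeastAtMostSuc_conv mult.commute)
  have c_nn: "c \<ge> 0" unfolding c_def using a_nonneg[of 1] Ppos[of 1] by simp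
  have bound: "a n \<le> P n * (c + real n - 1)" if "n \<ge> 1" for n
    using that
  proof (induction n rule: dec_induct)
    case base
    then show ?case unfolding c_def using Ppos[of 1] by simp
  next
    case (step m)
    have l: "0 < 1 - lam (Suc m)" using lam_range[of "Suc m"] by simp
    have "a (Suc m) \<le> (1 - lam (Suc m)) * a m + P (Suc m)"
      using a_rec[of "Suc m"] step(1) unfolding P_def by simp
    also have "\<dots> \<le> (1 - lam (Suc m)) * (P m * (c + real m - 1)) + P (Suc m)"
      using step(3) l by (intro add_right_mono mult_left_mono) auto
    also have "\<dots> = P (Suc m) * (c + real (Suc m) - 1)"
      unfolding PSuc by (simp add: algebra_simps)
    finally show ?case .
  qed
  define S where "S n = (\<Sum>j=1..n. P n / (1 - lam j))" for n
  have S0: "S \<longlonglongrightarrow> 0" using lam_lim unfolding S_def P_def .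
  have nP: "real n * P n \<le> S n" for n
  proof -
    have "real n * P n = (\<Sum>j=1..n. P n)" by simp
    also have "\<dots> \<le> S n" unfolding S_def
    proof (intro sum_mono)
      fix j assume "j \<in> {1..n}"
      then have "0 < 1 - lam j" "1 - lam j \<le> 1" using lam_range[of j] by auto
      then show "P n \<le> P n / (1 - lam j)" using Ppos[of n]
        by (simp add: le_divide_eq)
    qed
    finally show ?thesis .
  qed
  have nP0: "(\<lambda>n. real n * P n) \<longlonglongrightarrow> 0"
  proof (rule tendsto_sandwich[OF _ _ tendsto_const S0])
    show "\<forall>\<^sub>F n in sequentially. 0 \<le> real n * P n" using Ppos by (simp add: less_imp_le)
    show "\<forall>\<^sub>F n in sequentially. real n * P n \<le> S n" using nP by simp
  qed
  have P0: "P \<longlonglongrightarrow> 0"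
  proof (rule tendsto_sandwich[OF _ _ tendsto_const nP0])
    show "\<forall>\<^sub>F n in sequentially. 0 \<le> P n" using Ppos by (simp add: less_imp_le)
    show "\<forall>\<^sub>F n in sequentially. P n \<le> real n * P n"
      using eventually_ge_at_top[of "1::nat"]
      by eventually_elim (use Ppos in auto)
  qed
  have R0: "(\<lambda>n. c * P n + real n * P n) \<longlonglongrightarrow> 0"
    using tendsto_add[OF tendsto_mult[OF tendsto_const P0] nP0] by simp
  show ?thesis
  proof (rule tendsto_sandwich[OF _ _ tendsto_const R0])
    show "\<forall>\<^sub>F n in sequentially. 0 \<le> a n"
      using eventually_ge_at_top[of "1::nat"] by eventually_elim (use a_nonneg in auto)
    show "\<forall>\<^sub>F n in sequentially. a n \<le> c * P n + real n * P n"
      using eventually_ge_at_top[of "1::nat"]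
    proof eventually_elim
      case (elim n)
      have "a n \<le> P n * (c + real n - 1)" using bound elim by simp
      also have "\<dots> \<le> c * P n + real n * P n" using Ppos[of n] by (simp add: algebra_simps)
      finally show ?case .
    qed
  qed
qed

end
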